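(* Let $k\ge3$, let $G$ be a connected graph without isolated vertices, and let $u\in V(G)$. Let $G_u\bowtie K_k$ denote the graph obtained from the disjoint union of $G$ and a complete graph $K_k$ by identifying $u$ with a vertex of $K_k$. Then $G\in\mathcal F_{\chi,k}$ if and only if $G_u\bowtie K_k\in\mathcal F_{(k,2)}$.
   Context: All graphs are finite and simple. $\mathcal F_{\chi,k}$ is the class of graphs $G$ with $\chi(G)=k$ such that $\chi(H)<k$ for every proper subgraph $H$ of $G$ (for graphs without isolated vertices this is equivalent to $\chi(G-e)=k-1$ for every edge $e$). For a graph $G$, ${\rm es}_{\chi}(G)$ is the minimum number of edges of $G$ whose removal results in a spanning subgraph $G_1$ with $\chi(G_1)=\chi(G)-1$. $G$ is edge-stability critical if ${\rm es}_{\chi}(G-e)<{\rm es}_{\chi}(G)$ for every edge $e\in E(G)$. $\mathcal F_{(k,2)}$ is the class of $(k,2)$-critical graphs, i.e., edge-stability critical graphs $G$ with $\chi(G)=k$ and ${\rm es}_{\chi}(G)=2$. *)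

theory Defs
  imports Main
begin

definition graph :: "'a set \<Rightarrow> 'a set set \<Rightarrow> bool" where
  "graph V E \<longleftrightarrow> finite V \<and> (\<forall>e\<in>E. \<exists>x y. e = {x, y} \<and> x \<noteq> y \<and> x \<in> V \<and> y \<in> V)"

definition adj :: "'a set set \<Rightarrow> 'a \<Rightarrow> 'a \<Rightarrow> bool" where
  "adj E x y \<longleftrightarrow> {x, y} \<in> E"

definition connected_graph :: "'a set \<Rightarrow> 'a set set \<Rightarrow> bool" where
  "connected_graph V E \<longleftrightarrow> V \<noteq> {} \<and>
     (\<forall>x\<in>V. \<forall>y\<in>V. (x, y) \<in> {(a, b). adj E a b}\<^sup>*)"

definition no_isolated :: "'a set \<Rightarrow> 'a set set \<Rightarrow> bool" where
  "no_isolated V E \<longleftrightarrow> (\<forall>v\<in>V. \<exists>e\<in>E. v \<in> e)"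

definition colorable :: "'a set \<Rightarrow> 'a set set \<Rightarrow> nat \<Rightarrow> bool" where
  "colorable V E n \<longleftrightarrow> (\<exists>f :: 'a \<Rightarrow> nat. (\<forall>v\<in>V. f v < n) \<and>
      (\<forall>x y. {x, y} \<in> E \<longrightarrow> x \<noteq> y \<longrightarrow> f x \<noteq> f y))"

definition chi :: "'a set \<Rightarrow> 'a set set \<Rightarrow> nat" where
  "chi V E = (LEAST n. colorable V E n)"

definition subgraph :: "'a set \<Rightarrow> 'a set set \<Rightarrow> 'a set \<Rightarrow> 'a set set \<Rightarrow> bool" where
  "subgraph V' E' V E \<longleftrightarrow> V' \<subseteq> V \<and> E' \<subseteq> E \<and> (\<forall>e\<in>E'. e \<subseteq> V')"

definition F_chi :: "nat \<Rightarrow> 'a set \<Rightarrow> 'a set set \<Rightarrow> bool" where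
  "F_chi k V E \<longleftrightarrow> chi V E = k \<and>
     (\<forall>V' E'. subgraph V' E' V E \<and> (V', E') \<noteq> (V, E) \<longrightarrow> chi V' E' < k)"

definition es_chi :: "'a set \<Rightarrow> 'a set set \<Rightarrow> nat" where
  "es_chi V E = (LEAST m. \<exists>F. F \<subseteq> E \<and> card F = m \<and> chi V (E - F) = chi V E - 1)"

definition edge_stability_critical :: "'a set \<Rightarrow> 'a set set \<Rightarrow> bool" where
  "edge_stability_critical V E \<longleftrightarrow> (\<forall>e\<in>E. es_chi V (E - {e}) < es_chi V E)"

definition F_k2 :: "nat \<Rightarrow> 'a set \<Rightarrow> 'a set set \<Rightarrow> bool" where
  "F_k2 k V E \<longleftrightarrow> edge_stability_critical V E \<and> chi V E = k \<and> es_chi V E = 2"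

text \<open>G_u \<bowtie> K_k: vertices of G are tagged Inl, the k-1 new vertices of K_k
  are Inr 1, ..., Inr (k-1); the vertex of K_k identified with u is Inl u.\<close>

definition clique_part :: "'a \<Rightarrow> nat \<Rightarrow> ('a + nat) set" where
  "clique_part u k = insert (Inl u) (Inr ` {1..<k})"

definition join_V :: "'a set \<Rightarrow> nat \<Rightarrow> ('a + nat) set" where
  "join_V V k = Inl ` V \<union> Inr ` {1..<k}"

definition join_E :: "'a set set \<Rightarrow> 'a \<Rightarrow> nat \<Rightarrow> ('a + nat) set set" where
  "join_E E u k = (\<lambda>e. Inl ` e) ` E \<union>
     {{x, y} | x y. x \<in> clique_part u k \<and> y \<in> clique_part u k \<and> x \<noteq> y}"

end

theory Submission
  imports Defs
begin

definition GE :: "'a set set \<Rightarrow> ('a + nat) set set" where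
  "GE E0 = (\<lambda>e. Inl ` e) ` E0"

definition KE :: "'a \<Rightarrow> nat \<Rightarrow> ('a + nat) set set" where
  "KE u k = {{x, y} | x y. x \<in> clique_part u k \<and> y \<in> clique_part u k \<and> x \<noteq> y}"

definition sw :: "nat \<Rightarrow> nat \<Rightarrow> nat \<Rightarrow> nat" where
  "sw a b x = (if x = a then b else if x = b then a else x)"

definition idx :: "('a + nat) \<Rightarrow> nat" where
  "idx v = (case v of Inl _ \<Rightarrow> 0 | Inr i \<Rightarrow> i)"

lemma join_E_eq: "join_E E u k = GE E \<union> KE u k"
  by (simp add: join_E_def GE_def KE_def)

lemma colorable_mono:
  "colorable V E n \<Longrightarrow> E' \<subseteq> E \<Longrightarrow> V' \<subseteq> V \<Longrightarrow> n \<le> m \<Longrightarrow> colorable V' E' m"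
  unfolding colorable_def by (meson order_less_le_trans subsetD)

lemma chi_le: "colorable V E n \<Longrightarrow> chi V E \<le> n"
  unfolding chi_def by (rule Least_le)

lemma chi_col: "colorable V E n \<Longrightarrow> colorable V E (chi V E)"
  unfolding chi_def by (rule LeastI)

lemma chi_mono: "colorable V E n \<Longrightarrow> E' \<subseteq> E \<Longrightarrow> V' \<subseteq> V \<Longrightarrow> chi V' E' \<le> chi V E"
  by (meson chi_col chi_le colorable_mono order_refl)

lemma chi_ge: "colorable V E n \<Longrightarrow> (\<And>m. colorable V E m \<Longrightarrow> a \<le> m) \<Longrightarrow> a \<le> chi V E"
  using chi_col by blast

lemma clique_bound:
  assumes "colorable V E n" "S \<subseteq> V" "\<And>x y. x\<in>S \<Longrightarrow> y\<in>S \<Longrightarrow> x\<noteq>y \<Longrightarrow> {x,y} \<in> E"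
  shows "card S \<le> n"
proof -
  obtain f where f: "\<forall>v\<in>V. f v < n" "\<forall>x y. {x,y} \<in> E \<longrightarrow> x \<noteq> y \<longrightarrow> f x \<noteq> f y"
    using assms(1) unfolding colorable_def by blast
  have "inj_on f S" using f(2) assms(3) unfolding inj_on_def by blast
  moreover have "f ` S \<subseteq> {..<n}" using f(1) assms(2) by auto
  ultimately have "card S \<le> card {..<n::nat}" by (intro card_inj_on_le) auto
  then show ?thesis by simp
qed

lemma graph_edges: "graph V E \<Longrightarrow> e \<in> E \<Longrightarrow> e \<subseteq> V"
  unfolding graph_def by auto

lemma graph_finiteE: "graph V E \<Longrightarrow> finite E"
proof -
  assume g: "graph V E"
  have "E \<subseteq> Pow V" using graph_edges[OF g] by auto
  moreover have "finite V" using g by (simp add: graph_def)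
  ultimately show ?thesis by (meson finite_Pow_iff rev_finite_subset)
qed

lemma graph_sub: "graph V E \<Longrightarrow> E' \<subseteq> E \<Longrightarrow> graph V E'"
  unfolding graph_def by blast

lemma graph_colorable: "graph V E \<Longrightarrow> colorable V E (card V)"
proof -
  assume g: "graph V E"
  then have fin: "finite V" by (simp add: graph_def)
  obtain h where h: "bij_betw h V {0..<card V}" using ex_bij_betw_finite_nat[OF fin] by blast
  show ?thesis unfolding colorable_def
  proof (intro exI[of _ h] conjI allI impI ballI)
    fix v assume "v \<in> V" then show "h v < card V" using h by (auto simp: bij_betw_def)
  next
    fix x y assume xy: "{x,y} \<in> E" "x \<noteq> y"
    then have "x \<in> V" "y \<in> V" using graph_edges[OF g] by auto
    then show "h x \<noteq> h y" using h xy(2) by (auto simp: bij_betw_def inj_on_def)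
  qed
qed

lemma remove_edge:
  assumes c: "colorable V (E - {x}) n" and x: "x \<in> E" and g: "graph V E"
  shows "colorable V E (Suc n)"
proof -
  obtain f where f: "\<forall>v\<in>V. f v < n" "\<forall>p q. {p,q} \<in> E - {x} \<longrightarrow> p \<noteq> q \<longrightarrow> f p \<noteq> f q"
    using c unfolding colorable_def by blast
  obtain a b where ab: "x = {a,b}" "a \<noteq> b" "a \<in> V" "b \<in> V" using g x unfolding graph_def by blast
  show ?thesis unfolding colorable_def
  proof (intro exI[of _ "f(a := n)"] conjI allI impI ballI)
    fix v assume "v \<in> V" then show "(f(a := n)) v < Suc n" using f(1) by auto
  next
    fix p q assume pq: "{p,q} \<in> E" "p \<noteq> q"
    have pV: "p \<in> V" "q \<in> V" using graph_edges[OF g] pq by auto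
    show "(f(a := n)) p \<noteq> (f(a := n)) q"
    proof (cases "{p,q} = x")
      case True then have "(p = a \<and> q = b) \<or> (p = b \<and> q = a)" using ab by (auto simp: doubleton_eq_iff)
      then show ?thesis using f(1) pV pq(2) ab by auto
    next
      case False then have "f p \<noteq> f q" using f(2) pq by auto
      then show ?thesis using f(1) pV by auto
    qed
  qed
qed

lemma chi_remove: "graph V E \<Longrightarrow> x \<in> E \<Longrightarrow> chi V E \<le> Suc (chi V (E - {x}))"
proof -
  assume g: "graph V E" and x: "x \<in> E"
  have "colorable V (E - {x}) (card V)"
    using graph_colorable[OF g] by (rule colorable_mono) auto
  then have "colorable V (E - {x}) (chi V (E - {x}))" by (rule chi_col)
  then have "colorable V E (Suc (chi V (E - {x})))" using remove_edge x g by blast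
  then show ?thesis by (rule chi_le)
qed

lemma intermediate:
  assumes g: "graph V E" and "finite F0" "F0 \<subseteq> E" "chi V (E - F0) \<le> t" "t \<le> chi V E"
  shows "\<exists>F \<subseteq> F0. chi V (E - F) = t"
  using assms(2-5)
proof (induction F0 rule: finite_induct)
  case empty then show ?case by auto
next
  case (insert x F0)
  show ?case
  proof (cases "chi V (E - F0) \<le> t")
    case True then obtain F where "F \<subseteq> F0" "chi V (E-F) = t" using insert by auto
    then show ?thesis by blast
  next
    case False
    have g': "graph V (E - F0)" using graph_sub[OF g] by blast
    have "x \<in> E - F0" using insert by auto
    from chi_remove[OF g' this] have "chi V (E - F0) \<le> Suc (chi V (E - F0 - {x}))" .
    moreover have "E - F0 - {x} = E - insert x F0" by auto
    ultimately have "chi V (E - insert x F0) = t" using False insert.prems(2) by simp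
    then show ?thesis by blast
  qed
qed

lemma KE_memD: "{x,y} \<in> KE u k \<Longrightarrow> x \<in> clique_part u k \<and> y \<in> clique_part u k \<and> x \<noteq> y"
  unfolding KE_def by (auto simp: doubleton_eq_iff)

lemma KE_memI: "x \<in> clique_part u k \<Longrightarrow> y \<in> clique_part u k \<Longrightarrow> x \<noteq> y \<Longrightarrow> {x,y} \<in> KE u k"
  unfolding KE_def by blast

lemma KE_elem: "c \<in> KE u k \<Longrightarrow> \<exists>p q. c = {p,q} \<and> p \<in> clique_part u k \<and> q \<in> clique_part u k \<and> p \<noteq> q"
  unfolding KE_def by blast

lemma GE_KE_disj: "GE E0 \<inter> KE u k = {}"
proof (rule ccontr)
  assume "GE E0 \<inter> KE u k \<noteq> {}"
  then obtain g where g1: "g \<in> GE E0" and g2: "g \<in> KE u k" by blast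
  obtain e where e: "g = Inl ` e" using g1 unfolding GE_def by blast
  obtain p q where pq: "g = {p,q}" "p \<in> clique_part u k" "q \<in> clique_part u k" "p \<noteq> q"
    using KE_elem[OF g2] by blast
  have "p \<in> Inl ` e" "q \<in> Inl ` e" using e pq(1) by auto
  then have "p = Inl u" "q = Inl u" using pq(2,3) unfolding clique_part_def by auto
  then show False using pq(4) by simp
qed

lemma clique_card: "1 \<le> k \<Longrightarrow> card (clique_part u k) = k"
  unfolding clique_part_def by (subst card_insert_disjoint) (auto simp: card_image inj_on_def)

lemma clique_sub: "u \<in> V \<Longrightarrow> clique_part u k \<subseteq> join_V V k"
  by (auto simp: clique_part_def join_V_def)

lemma idx_inj: "x \<in> clique_part u k \<Longrightarrow> y \<in> clique_part u k \<Longrightarrow> idx x = idx y \<Longrightarrow> x = y"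
  by (auto simp: clique_part_def idx_def)

lemma idx_bound: "x \<in> clique_part u k \<Longrightarrow> 1 \<le> k \<Longrightarrow> idx x < k"
  by (auto simp: clique_part_def idx_def)

lemma idx_ne: "x \<in> clique_part u k \<Longrightarrow> y \<in> clique_part u k \<Longrightarrow> x \<noteq> y \<Longrightarrow> idx x \<noteq> idx y"
proof
  assume "x \<in> clique_part u k" "y \<in> clique_part u k" "x \<noteq> y" "idx x = idx y"
  then show False using idx_inj[of x u k y] by simp
qed

lemma L1:
  assumes "colorable (join_V V k) J' n" "KE u k \<subseteq> J'" "u \<in> V" "1 \<le> k"
  shows "k \<le> n"
proof -
  have "card (clique_part u k) \<le> n"
  proof (rule clique_bound[OF assms(1) clique_sub[OF assms(3)]])
    fix x y assume "x \<in> clique_part u k" "y \<in> clique_part u k" "x \<noteq> y"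
    then have "{x,y} \<in> KE u k" by (rule KE_memI)
    then show "{x,y} \<in> J'" using assms(2) by (rule subsetD[rotated])
  qed
  then show ?thesis using clique_card[OF assms(4), of u] by linarith
qed

lemma L1':
  assumes "colorable (join_V V k) J' n" "KE u k - {c} \<subseteq> J'" "c \<in> KE u k" "u \<in> V" "1 \<le> k"
  shows "k - 1 \<le> n"
proof -
  obtain p q where pq: "c = {p,q}" "p \<in> clique_part u k" "q \<in> clique_part u k" "p \<noteq> q"
    using KE_elem[OF assms(3)] by blast
  have "card (clique_part u k - {p}) \<le> n"
  proof (rule clique_bound[OF assms(1)])
    show "clique_part u k - {p} \<subseteq> join_V V k" using clique_sub[OF assms(4)] by auto
  next
    fix x y assume xy: "x \<in> clique_part u k - {p}" "y \<in> clique_part u k - {p}" "x \<noteq> y"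
    then have "{x,y} \<in> KE u k" by (intro KE_memI) auto
    moreover have "p \<notin> {x,y}" using xy by blast
    then have "{x,y} \<noteq> c" using pq(1) by blast
    ultimately have "{x,y} \<in> KE u k - {c}" by simp
    then show "{x,y} \<in> J'" using assms(2) by (rule subsetD[rotated])
  qed
  moreover have "card (clique_part u k - {p}) = k - 1"
  proof -
    have "finite (clique_part u k)" by (simp add: clique_part_def)
    then show ?thesis using clique_card[OF assms(5), of u] pq(2) by (simp add: card_Diff_singleton)
  qed
  ultimately show ?thesis by linarith
qed

lemma L2:
  assumes "colorable (join_V V k) J' n" "GE E0 \<subseteq> J'"
  shows "colorable V E0 n"
proof -
  obtain f where f: "\<forall>v\<in>join_V V k. f v < n" "\<forall>x y. {x,y} \<in> J' \<longrightarrow> x \<noteq> y \<longrightarrow> f x \<noteq> f y"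
    using assms(1) unfolding colorable_def by blast
  show ?thesis unfolding colorable_def
  proof (intro exI[of _ "f \<circ> Inl"] conjI allI impI ballI)
    fix v assume "v \<in> V" then show "(f \<circ> Inl) v < n" using f(1) by (auto simp: join_V_def)
  next
    fix x y assume xy: "{x,y} \<in> E0" "x \<noteq> y"
    then have "Inl ` {x,y} \<in> GE E0" unfolding GE_def by blast
    then have "{Inl x, Inl y} \<in> J'" using assms(2) by auto
    then show "(f \<circ> Inl) x \<noteq> (f \<circ> Inl) y" using f(2) xy(2) by auto
  qed
qed

lemma glue:
  assumes gc: "colorable V E0 n" and u: "u \<in> V"
    and hb: "\<forall>v\<in>clique_part u k. h v < n"
    and hp: "\<forall>x y. {x,y} \<in> K' \<longrightarrow> x \<noteq> y \<longrightarrow> h x \<noteq> h y"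
    and K': "K' \<subseteq> KE u k"
  shows "colorable (join_V V k) (GE E0 \<union> K') n"
proof -
  obtain g where gb: "\<forall>v\<in>V. g v < n" and gp: "\<forall>x y. {x,y} \<in> E0 \<longrightarrow> x \<noteq> y \<longrightarrow> g x \<noteq> g y"
    using gc unfolding colorable_def by blast
  define s where "s = sw (h (Inl u)) (g u)"
  define f where "f = (\<lambda>v. case v of Inl a \<Rightarrow> g a | Inr i \<Rightarrow> s (h (Inr i)))"
  have sinj: "s a = s b \<Longrightarrow> a = b" for a b by (auto simp: s_def sw_def split: if_splits)
  have hu: "h (Inl u) < n" using hb by (simp add: clique_part_def)
  have sb: "a < n \<Longrightarrow> s a < n" for a using hu gb u by (auto simp: s_def sw_def)
  have fu: "f (Inl u) = s (h (Inl u))" by (simp add: f_def s_def sw_def)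
  have fc: "v \<in> clique_part u k \<Longrightarrow> f v = s (h v)" for v
  proof -
    assume "v \<in> clique_part u k"
    then consider "v = Inl u" | i where "v = Inr i" unfolding clique_part_def by blast
    then show ?thesis using fu by cases (simp_all add: f_def)
  qed
  show ?thesis unfolding colorable_def
  proof (intro exI[of _ f] conjI allI impI ballI)
    fix v assume "v \<in> join_V V k"
    then consider a where "v = Inl a" "a \<in> V" | i where "v = Inr i" "i \<in> {1..<k}"
      by (auto simp: join_V_def)
    then show "f v < n"
    proof cases
      case 1 then show ?thesis using gb by (simp add: f_def)
    next
      case 2
      then have "v \<in> clique_part u k" by (simp add: clique_part_def)
      then show ?thesis using fc hb sb by auto
    qed
  next
    fix x y assume xy: "{x,y} \<in> GE E0 \<union> K'" "x \<noteq> y"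
    show "f x \<noteq> f y"
    proof (cases "{x,y} \<in> K'")
      case True
      have kx: "{x,y} \<in> KE u k" using K' True by (rule subsetD)
      have "x \<in> clique_part u k" "y \<in> clique_part u k" using KE_memD[OF kx] by auto
      have "h x \<noteq> h y" using hp True xy(2) by blast
      then have "s (h x) \<noteq> s (h y)" using sinj by blast
      then show ?thesis using fc[OF \<open>x \<in> clique_part u k\<close>] fc[OF \<open>y \<in> clique_part u k\<close>] by simp
    next
      case False
      then obtain e where e: "e \<in> E0" "{x,y} = Inl ` e" using xy(1) by (auto simp: GE_def)
      have "x \<in> {x,y}" "y \<in> {x,y}" by simp_all
      then have "x \<in> Inl ` e" "y \<in> Inl ` e" using e(2) by simp_all
      then obtain a b where ab: "x = Inl a" "y = Inl b" by (meson imageE)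
      have "(Inl ` {a,b} :: ('a + nat) set) = Inl ` e" using e(2) ab by simp
      then have "{a,b} = e" by (rule inj_image_eq_iff[OF inj_Inl, THEN iffD1])
      then have "g a \<noteq> g b" using gp e(1) xy(2) ab by auto
      then show ?thesis using ab by (simp add: f_def)
    qed
  qed
qed

lemma color_full:
  assumes "colorable V E0 n" "u \<in> V" "k \<le> n" "1 \<le> k"
  shows "colorable (join_V V k) (GE E0 \<union> KE u k) n"
proof (rule glue[OF assms(1,2), where h = idx])
  show "\<forall>v\<in>clique_part u k. idx v < n" using idx_bound assms(3,4) by fastforce
  show "\<forall>x y. {x,y} \<in> KE u k \<longrightarrow> x \<noteq> y \<longrightarrow> idx x \<noteq> idx y"
  proof (intro allI impI)
    fix x y assume xy: "{x,y} \<in> KE u k" "x \<noteq> y"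
    have "x \<in> clique_part u k \<and> y \<in> clique_part u k \<and> x \<noteq> y" by (rule KE_memD[OF xy(1)])
    then show "idx x \<noteq> idx y" using idx_ne[of x u k y] by simp
  qed
qed simp

lemma phi_inj: "(i::nat) \<noteq> j \<Longrightarrow> a \<noteq> b \<Longrightarrow> \<not>(i = a \<and> j = b) \<Longrightarrow> \<not>(i = b \<and> j = a) \<Longrightarrow>
  (if i = max a b then min a b else if max a b < i then i - 1 else i) \<noteq>
  (if j = max a b then min a b else if max a b < j then j - 1 else j)"
  by (cases "a < b") (simp_all add: max_def min_def split: if_split, linarith+)

lemma color_minus:
  assumes "colorable V E0 (k - 1)" "u \<in> V" "c \<in> KE u k" "1 \<le> k"
  shows "colorable (join_V V k) (GE E0 \<union> (KE u k - {c})) (k - 1)"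
proof -
  obtain p q where pq: "c = {p,q}" "p \<in> clique_part u k" "q \<in> clique_part u k" "p \<noteq> q"
    using KE_elem[OF assms(3)] by blast
  define a where "a = idx p"
  define b where "b = idx q"
  have ab: "a \<noteq> b" unfolding a_def b_def by (rule idx_ne[OF pq(2,3,4)])
  have abk: "a < k" "b < k" using idx_bound[OF pq(2) assms(4)] idx_bound[OF pq(3) assms(4)]
    unfolding a_def b_def by auto
  define h :: "('a + nat) \<Rightarrow> nat" where "h = (\<lambda>v. let j = idx v in
      (if j = max a b then min a b else if max a b < j then j - 1 else j))"
  show ?thesis
  proof (rule glue[OF assms(1,2), where h = h])
    show "\<forall>v\<in>clique_part u k. h v < k - 1"
    proof
      fix v assume v: "v \<in> clique_part u k"
      have iv: "idx v < k" by (rule idx_bound[OF v assms(4)])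
      show "h v < k - 1" unfolding h_def Let_def using ab abk iv
        by (cases "a < b") (simp_all add: max_def min_def split: if_split, linarith+)
    qed
    show "\<forall>x y. {x,y} \<in> KE u k - {c} \<longrightarrow> x \<noteq> y \<longrightarrow> h x \<noteq> h y"
    proof (intro allI impI)
      fix x y assume xy: "{x,y} \<in> KE u k - {c}" "x \<noteq> y"
      then have kxy: "{x,y} \<in> KE u k" by simp
      have "x \<in> clique_part u k \<and> y \<in> clique_part u k \<and> x \<noteq> y" by (rule KE_memD[OF kxy])
      then have xc: "x \<in> clique_part u k" "y \<in> clique_part u k" by simp_all
      have 1: "idx x \<noteq> idx y" by (rule idx_ne[OF xc xy(2)])
      have 2: "\<not>(idx x = a \<and> idx y = b)"
      proof
        assume "idx x = a \<and> idx y = b"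
        then have "x = p" "y = q" using idx_inj xc pq(2,3) unfolding a_def b_def by metis+
        then show False using xy(1) pq(1) by simp
      qed
      have 3: "\<not>(idx x = b \<and> idx y = a)"
      proof
        assume "idx x = b \<and> idx y = a"
        then have "x = q" "y = p" using idx_inj xc pq(2,3) unfolding a_def b_def by metis+
        then have "{x,y} = c" using pq(1) by auto
        then show False using xy(1) by simp
      qed
      show "h x \<noteq> h y" unfolding h_def Let_def using phi_inj[OF 1 ab 2 3] .
    qed
  qed simp
qed

lemma GE_diff: "GE E1 - {Inl ` e} = GE (E1 - {e})"
proof
  show "GE E1 - {Inl ` e} \<subseteq> GE (E1 - {e})"
  proof
    fix g assume g: "g \<in> GE E1 - {Inl ` e}"
    then obtain e' where e': "e' \<in> E1" "g = Inl ` e'" unfolding GE_def by blast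
    then have "e' \<noteq> e" using g by blast
    then show "g \<in> GE (E1 - {e})" using e' unfolding GE_def by blast
  qed
next
  show "GE (E1 - {e}) \<subseteq> GE E1 - {Inl ` e}"
  proof
    fix g assume g: "g \<in> GE (E1 - {e})"
    then obtain e' where e': "e' \<in> E1" "e' \<noteq> e" "g = Inl ` e'" unfolding GE_def by blast
    have "Inl ` e' \<noteq> (Inl ` e :: ('a + 'b) set)"
      using e'(2) inj_image_eq_iff[OF inj_Inl, of e' e] by simp
    then show "g \<in> GE E1 - {Inl ` e}" using e' unfolding GE_def by blast
  qed
qed

lemma diff_G: "K1 \<subseteq> KE u k \<Longrightarrow> (GE E1 \<union> K1) - {Inl ` e} = GE (E1 - {e}) \<union> K1"
proof -
  assume K1: "K1 \<subseteq> KE u k"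
  have "Inl ` e \<in> GE {e}" by (simp add: GE_def)
  then have "Inl ` e \<notin> KE u k" using GE_KE_disj[of "{e}" u k] by blast
  then have "Inl ` e \<notin> K1" using K1 by blast
  then have "(GE E1 \<union> K1) - {Inl ` e} = (GE E1 - {Inl ` e}) \<union> K1" by blast
  then show ?thesis by (simp only: GE_diff)
qed

lemma diff_K: "c \<in> KE u k \<Longrightarrow> (GE E1 \<union> K1) - {c} = GE E1 \<union> (K1 - {c})"
proof -
  assume c: "c \<in> KE u k"
  then have "c \<notin> GE E1" using GE_KE_disj[of E1 u k] by blast
  then show ?thesis by blast
qed

lemma GE_mono: "E1 \<subseteq> E2 \<Longrightarrow> GE E1 \<subseteq> GE E2"
  unfolding GE_def by (rule image_mono)

lemma es_le: "F \<subseteq> E \<Longrightarrow> card F = m \<Longrightarrow> chi V (E - F) = chi V E - 1 \<Longrightarrow> es_chi V E \<le> m"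
  unfolding es_chi_def by (rule Least_le) blast

lemma es_wit:
  assumes "F0 \<subseteq> E" "chi V (E - F0) = chi V E - 1"
  shows "\<exists>F. F \<subseteq> E \<and> card F = es_chi V E \<and> chi V (E - F) = chi V E - 1"
proof -
  have "\<exists>F. F \<subseteq> E \<and> card F = card F0 \<and> chi V (E - F) = chi V E - 1" using assms by blast
  then show ?thesis unfolding es_chi_def by (rule LeastI)
qed

lemma colorable_empty: "colorable V {} 1"
  unfolding colorable_def by (intro exI[of _ "\<lambda>_. 0"]) simp

theorem theorem3p1:
  fixes V :: "'a set" and E :: "'a set set" and u :: 'a and k :: nat
  assumes "graph V E"
    and "k \<ge> 3"
    and "connected_graph V E"
    and "no_isolated V E"
    and "u \<in> V"
  shows "F_chi k V E \<longleftrightarrow> F_k2 k (join_V V k) (join_E E u k)"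
proof -
  note g = assms(1)
  have k1: "1 \<le> k" using assms(2) by simp
  have k3: "3 \<le> k" by (rule assms(2))
  have u: "u \<in> V" by (rule assms(5))
  define W where "W = join_V V k"
  define J where "J = join_E E u k"
  have J: "J = GE E \<union> KE u k" unfolding J_def by (rule join_E_eq)
  have finV: "finite V" using g by (simp add: graph_def)
  have gW: "graph W J"
    unfolding graph_def
  proof
    show "finite W" unfolding W_def join_V_def using finV by simp
    show "\<forall>e\<in>J. \<exists>x y. e = {x,y} \<and> x \<noteq> y \<and> x \<in> W \<and> y \<in> W"
    proof
      fix e assume "e \<in> J"
      then consider "e \<in> GE E" | "e \<in> KE u k" unfolding J by blast
      then show "\<exists>x y. e = {x,y} \<and> x \<noteq> y \<and> x \<in> W \<and> y \<in> W"
      proof cases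
        case 1
        then obtain e1 where e1: "e1 \<in> E" "e = Inl ` e1" unfolding GE_def by blast
        obtain a b where ab: "e1 = {a,b}" "a \<noteq> b" "a \<in> V" "b \<in> V"
          using g e1(1) unfolding graph_def by blast
        show ?thesis
        proof (intro exI conjI)
          show "e = {Inl a, Inl b}" using e1(2) ab(1) by simp
          show "Inl a \<noteq> (Inl b :: 'a + nat)" using ab(2) by simp
          show "Inl a \<in> W" using ab(3) unfolding W_def join_V_def by simp
          show "Inl b \<in> W" using ab(4) unfolding W_def join_V_def by simp
        qed
      next
        case 2
        obtain p q where pq: "e = {p,q}" "p \<in> clique_part u k" "q \<in> clique_part u k" "p \<noteq> q"
          using KE_elem[OF 2] by blast
        have "p \<in> W" unfolding W_def by (rule subsetD[OF clique_sub[OF u] pq(2)])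
        moreover have "q \<in> W" unfolding W_def by (rule subsetD[OF clique_sub[OF u] pq(3)])
        ultimately show ?thesis using pq(1,4) by (intro exI[of _ p] exI[of _ q]) simp
      qed
    qed
  qed
  have colJ: "colorable W J (card W)" by (rule graph_colorable[OF gW])
  have finJ: "finite J" by (rule graph_finiteE[OF gW])
  obtain e0 where e0: "e0 \<in> E" using assms(4) u unfolding no_isolated_def by blast
  define c :: "('a + nat) set" where "c = {Inl u, Inr 1}"
  have cin: "Inl u \<in> clique_part u k" "Inr 1 \<in> clique_part u k"
    using k3 by (simp_all add: clique_part_def)
  have c: "c \<in> KE u k" unfolding c_def by (rule KE_memI[OF cin]) simp

  have L1W: "k \<le> n" if "colorable W J' n" "KE u k \<subseteq> J'" for J' n
    using L1[OF that(1)[unfolded W_def] that(2) u k1] .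
  have L1'W: "k - 1 \<le> n" if "colorable W J' n" "KE u k - {c'} \<subseteq> J'" "c' \<in> KE u k" for J' n c'
    using L1'[OF that(1)[unfolded W_def] that(2) that(3) u k1] .
  have L2W: "colorable V E0 n" if "colorable W J' n" "GE E0 \<subseteq> J'" for J' n E0
    using L2[OF that(1)[unfolded W_def] that(2)] .
  have fullW: "colorable W (GE E0 \<union> KE u k) n" if "colorable V E0 n" "k \<le> n" for E0 n
    unfolding W_def using color_full[OF that(1) u that(2) k1] .
  have minusW: "colorable W (GE E0 \<union> (KE u k - {c'})) (k - 1)"
    if "colorable V E0 (k - 1)" "c' \<in> KE u k" for E0 c'
    unfolding W_def using color_minus[OF that(1) u that(2) k1] .
  have key: "chi W (GE E0 \<union> (KE u k - {c'})) = k - 1"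
    if "colorable V E0 (k - 1)" "c' \<in> KE u k" for E0 c'
  proof -
    have col: "colorable W (GE E0 \<union> (KE u k - {c'})) (k - 1)" by (rule minusW[OF that])
    have "k - 1 \<le> chi W (GE E0 \<union> (KE u k - {c'}))"
    proof (rule chi_ge[OF col])
      fix m assume "colorable W (GE E0 \<union> (KE u k - {c'})) m"
      moreover have "KE u k - {c'} \<subseteq> GE E0 \<union> (KE u k - {c'})" by blast
      ultimately show "k - 1 \<le> m" using that(2) by (rule L1'W)
    qed
    moreover have "chi W (GE E0 \<union> (KE u k - {c'})) \<le> k - 1" by (rule chi_le[OF col])
    ultimately show ?thesis by simp
  qed
  have chi_KE_ge: "k \<le> chi W J'" if "colorable W J' n" "KE u k \<subseteq> J'" for J' n
    by (rule chi_ge[OF that(1)]) (rule L1W[OF _ that(2)])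
  have diffG: "J - {Inl ` e1} = GE (E - {e1}) \<union> KE u k" for e1
    unfolding J by (rule diff_G[where u=u and k=k]) simp
  have diffK: "J - {c'} = GE E \<union> (KE u k - {c'})" if "c' \<in> KE u k" for c'
    unfolding J by (rule diff_K[OF that])
  have diffGK: "J - {Inl ` e1} - {c'} = GE (E - {e1}) \<union> (KE u k - {c'})" if "c' \<in> KE u k" for e1 c'
    unfolding diffG by (rule diff_K[OF that])
  have diffKG: "J - {c'} - {Inl ` e1} = GE (E - {e1}) \<union> (KE u k - {c'})" if "c' \<in> KE u k" for e1 c'
    unfolding diffK[OF that] by (rule diff_G[where u=u and k=k]) blast
  have GinJ: "Inl ` e1 \<in> J" if "e1 \<in> E" for e1
    unfolding J GE_def using that by blast
  have GnotK: "Inl ` e1 \<notin> KE u k" for e1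
  proof -
    have "Inl ` e1 \<in> GE {e1}" by (simp add: GE_def)
    then show ?thesis using GE_KE_disj[of "{e1}" u k] by blast
  qed
  have KnotG: "c' \<notin> GE E1" if "c' \<in> KE u k" for c' E1
    using GE_KE_disj[of E1 u k] that by blast

  have "F_chi k V E \<longleftrightarrow> F_k2 k W J"
  proof
    assume F: "F_chi k V E"
    then have chiG: "chi V E = k"
      and sub: "\<And>V' E'. subgraph V' E' V E \<Longrightarrow> (V', E') \<noteq> (V, E) \<Longrightarrow> chi V' E' < k"
      unfolding F_chi_def by auto
    have colVc: "colorable V E (card V)" by (rule graph_colorable[OF g])
    have colGk: "colorable V E k" using chi_col[OF colVc] chiG by simp
    have crit: "colorable V (E - {e1}) (k - 1)" if "e1 \<in> E" for e1
    proof -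
      have "subgraph V (E - {e1}) V E" unfolding subgraph_def using graph_edges[OF g] by blast
      moreover have "(V, E - {e1}) \<noteq> (V, E)" using that by blast
      ultimately have lt: "chi V (E - {e1}) < k" by (rule sub)
      have "colorable V (E - {e1}) (card V)" by (rule colorable_mono[OF colVc]) auto
      then have "colorable V (E - {e1}) (chi V (E - {e1}))" by (rule chi_col)
      then show ?thesis by (rule colorable_mono) (use lt in auto)
    qed
    have colJk: "colorable W J k" unfolding J by (rule fullW[OF colGk]) simp
    have colsub: "colorable W J' k" if "J' \<subseteq> J" for J'
      by (rule colorable_mono[OF colJk that]) auto
    have chiJ: "chi W J = k"
    proof -
      have "chi W J \<le> k" by (rule chi_le[OF colJk])
      moreover have "k \<le> chi W J" by (rule chi_KE_ge[OF colJk]) (simp add: J)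
      ultimately show ?thesis by simp
    qed
    have P2: "\<exists>F. F \<subseteq> J \<and> card F = 2 \<and> chi W (J - F) = chi W J - 1"
    proof (intro exI conjI)
      show "{Inl ` e0, c} \<subseteq> J" using GinJ[OF e0] c unfolding J by blast
      have "Inl ` e0 \<noteq> c" using GnotK[of e0] c by blast
      then show "card {Inl ` e0, c} = 2" by simp
      have "J - {Inl ` e0, c} = J - {Inl ` e0} - {c}" by blast
      also have "\<dots> = GE (E - {e0}) \<union> (KE u k - {c})" by (rule diffGK[OF c])
      finally show "chi W (J - {Inl ` e0, c}) = chi W J - 1"
        using key[OF crit[OF e0] c] chiJ by simp
    qed
    have notP: "chi W (J - F) \<noteq> chi W J - 1" if FJ: "F \<subseteq> J" "card F < 2" for F
    proof -
      have finF: "finite F" by (rule finite_subset[OF FJ(1) finJ])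
      consider "card F = 0" | "card F = 1" using FJ(2) by linarith
      then show ?thesis
      proof cases
        case 1 then have "F = {}" using finF by simp
        then show ?thesis using chiJ k1 by simp
      next
        case 2 then obtain f where f: "F = {f}" by (rule card_1_singletonE)
        show ?thesis
        proof (cases "f \<in> KE u k")
          case False
          then have "KE u k \<subseteq> J - F" using f unfolding J by blast
          moreover have "colorable W (J - F) k" by (rule colsub) blast
          ultimately have "k \<le> chi W (J - F)" by (intro chi_KE_ge)
          then show ?thesis using chiJ k1 by linarith
        next
          case True
          then have sb: "GE E \<subseteq> J - F" using f KnotG[OF True, of E] unfolding J by blast
          show ?thesis
          proof
            assume eq: "chi W (J - F) = chi W J - 1"
            have "colorable W (J - F) k" by (rule colsub) blast
            then have "colorable W (J - F) (chi W (J - F))" by (rule chi_col)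
            then have "colorable W (J - F) (k - 1)" using eq chiJ by simp
            then have "colorable V E (k - 1)" by (rule L2W[OF _ sb])
            then have "chi V E \<le> k - 1" by (rule chi_le)
            then show False using chiG k1 by linarith
          qed
        qed
      qed
    qed
    have esJ: "es_chi W J = 2"
      unfolding es_chi_def
    proof (rule Least_equality)
      show "\<exists>F. F \<subseteq> J \<and> card F = 2 \<and> chi W (J - F) = chi W J - 1" by (rule P2)
    next
      fix m assume "\<exists>F. F \<subseteq> J \<and> card F = m \<and> chi W (J - F) = chi W J - 1"
      then obtain F where F: "F \<subseteq> J" "card F = m" "chi W (J - F) = chi W J - 1" by blast
      show "2 \<le> m"
      proof (rule ccontr)
        assume "\<not> 2 \<le> m"
        then have "card F < 2" using F(2) by simp
        then show False using notP[OF F(1)] F(3) by blast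
      qed
    qed
    have esle1: "es_chi W (J - {e}) \<le> 1" if eJ: "e \<in> J" for e
    proof -
      consider "e \<in> KE u k" | e1 where "e1 \<in> E" "e = Inl ` e1" using eJ unfolding J GE_def by blast
      then show ?thesis
      proof cases
        case 1
        have Jd: "J - {e} = GE E \<union> (KE u k - {e})" by (rule diffK[OF 1])
        have col: "colorable W (J - {e}) k" by (rule colsub) blast
        have chiJe: "chi W (J - {e}) = k"
        proof -
          have "chi W (J - {e}) \<le> chi W J" by (rule chi_mono[OF colJk]) auto
          moreover have "k \<le> chi W (J - {e})"
          proof (rule chi_ge[OF col])
            fix m assume "colorable W (J - {e}) m"
            then have "colorable V E m" by (rule L2W) (simp add: Jd)
            then have "chi V E \<le> m" by (rule chi_le)
            then show "k \<le> m" using chiG by simp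
          qed
          ultimately show ?thesis using chiJ by simp
        qed
        show ?thesis
        proof (rule es_le)
          have "Inl ` e0 \<noteq> e" using GnotK[of e0] 1 by blast
          then show "{Inl ` e0} \<subseteq> J - {e}" using GinJ[OF e0] by blast
          show "card {Inl ` e0} = 1" by simp
          show "chi W (J - {e} - {Inl ` e0}) = chi W (J - {e}) - 1"
            using diffKG[OF 1, of e0] key[OF crit[OF e0] 1] chiJe by simp
        qed
      next
        case 2
        have Jd: "J - {e} = GE (E - {e1}) \<union> KE u k" using diffG[of e1] 2(2) by simp
        have col: "colorable W (J - {e}) k" by (rule colsub) blast
        have chiJe: "chi W (J - {e}) = k"
        proof -
          have "chi W (J - {e}) \<le> chi W J" by (rule chi_mono[OF colJk]) auto
          moreover have "k \<le> chi W (J - {e})" by (rule chi_KE_ge[OF col]) (simp add: Jd)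
          ultimately show ?thesis using chiJ by simp
        qed
        show ?thesis
        proof (rule es_le)
          have "c \<noteq> e" using GnotK[of e1] c 2(2) by blast
          then show "{c} \<subseteq> J - {e}" using c unfolding J by blast
          show "card {c} = 1" by simp
          show "chi W (J - {e} - {c}) = chi W (J - {e}) - 1"
            using diffGK[OF c, of e1] 2(2) key[OF crit[OF 2(1)] c] chiJe by simp
        qed
      qed
    qed
    have "edge_stability_critical W J" unfolding edge_stability_critical_def
    proof
      fix e assume "e \<in> J"
      then have "es_chi W (J - {e}) \<le> 1" by (rule esle1)
      then show "es_chi W (J - {e}) < es_chi W J" using esJ by simp
    qed
    then show "F_k2 k W J" unfolding F_k2_def using chiJ esJ by simp
  next
    assume H: "F_k2 k W J"
    then have critH: "\<And>e. e \<in> J \<Longrightarrow> es_chi W (J - {e}) < es_chi W J"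
      and chiJ: "chi W J = k" and esJ: "es_chi W J = 2"
      unfolding F_k2_def edge_stability_critical_def by auto
    have colJk: "colorable W J k" using chi_col[OF colJ] chiJ by simp
    have colsub: "colorable W J' k" if "J' \<subseteq> J" for J'
      by (rule colorable_mono[OF colJk that]) auto
    have colGk: "colorable V E k" by (rule L2W[OF colJk]) (simp add: J)
    have chiG: "chi V E = k"
    proof (rule ccontr)
      assume ne: "chi V E \<noteq> k"
      have le: "chi V E \<le> k" by (rule chi_le[OF colGk])
      have "colorable V E (chi V E)" by (rule chi_col[OF colGk])
      then have cg: "colorable V E (k - 1)" by (rule colorable_mono) (use le ne in auto)
      have "es_chi W J \<le> 1"
      proof (rule es_le)
        show "{c} \<subseteq> J" using c unfolding J by blast
        show "card {c} = 1" by simp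
        show "chi W (J - {c}) = chi W J - 1" using diffK[OF c] key[OF cg c] chiJ by simp
      qed
      then show False using esJ by simp
    qed
    have critG: "colorable V (E - {e1}) (k - 1)" if e1: "e1 \<in> E" for e1
    proof -
      have eJ: "Inl ` e1 \<in> J" by (rule GinJ[OF e1])
      have lt: "es_chi W (J - {Inl ` e1}) < 2" using critH[OF eJ] esJ by simp
      have Jd: "J - {Inl ` e1} = GE (E - {e1}) \<union> KE u k" by (rule diffG)
      have colJe: "colorable W (J - {Inl ` e1}) k" by (rule colsub) blast
      have chiJe: "chi W (J - {Inl ` e1}) = k"
      proof -
        have "chi W (J - {Inl ` e1}) \<le> chi W J" by (rule chi_mono[OF colJk]) auto
        moreover have "k \<le> chi W (J - {Inl ` e1})" by (rule chi_KE_ge[OF colJe]) (simp add: Jd)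
        ultimately show ?thesis using chiJ by simp
      qed
      have g2: "graph W (J - {Inl ` e1})" by (rule graph_sub[OF gW]) blast
      have fin2: "finite (J - {Inl ` e1})" using finJ by simp
      have "chi W (J - {Inl ` e1} - (J - {Inl ` e1})) \<le> 1"
        using chi_le[OF colorable_empty[of W]] by simp
      then have low: "chi W (J - {Inl ` e1} - (J - {Inl ` e1})) \<le> k - 1" using k3 by linarith
      obtain F0 where F0: "F0 \<subseteq> J - {Inl ` e1}" "chi W (J - {Inl ` e1} - F0) = k - 1"
        using intermediate[OF g2 fin2 subset_refl low] chiJe by auto
      obtain F where F: "F \<subseteq> J - {Inl ` e1}" "card F = es_chi W (J - {Inl ` e1})"
          "chi W (J - {Inl ` e1} - F) = chi W (J - {Inl ` e1}) - 1"
        using es_wit[OF F0(1)] F0(2) chiJe by auto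
      have finF: "finite F" using finite_subset[OF F(1) fin2] .
      have cF: "card F < 2" using F(2) lt by simp
      consider "card F = 0" | "card F = 1" using cF by linarith
      then show ?thesis
      proof cases
        case 1 then have "F = {}" using finF by simp
        then have False using F(3) chiJe k1 by simp
        then show ?thesis ..
      next
        case 2 then obtain f where f: "F = {f}" by (rule card_1_singletonE)
        show ?thesis
        proof (cases "f \<in> KE u k")
          case False
          then have "KE u k \<subseteq> J - {Inl ` e1} - F" using f Jd by blast
          moreover have "colorable W (J - {Inl ` e1} - F) k" by (rule colsub) blast
          ultimately have "k \<le> chi W (J - {Inl ` e1} - F)" by (intro chi_KE_ge)
          then have False using F(3) chiJe k1 by linarith
          then show ?thesis ..
        next
          case True
          have fG: "f \<notin> GE (E - {e1})" by (rule KnotG[OF True])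
          have sb: "GE (E - {e1}) \<subseteq> J - {Inl ` e1} - F" using f Jd fG by blast
          have "colorable W (J - {Inl ` e1} - F) k" by (rule colsub) blast
          then have "colorable W (J - {Inl ` e1} - F) (chi W (J - {Inl ` e1} - F))" by (rule chi_col)
          then have "colorable W (J - {Inl ` e1} - F) (k - 1)" using F(3) chiJe by simp
          then show ?thesis by (rule L2W[OF _ sb])
        qed
      qed
    qed
    show "F_chi k V E" unfolding F_chi_def
    proof (intro conjI allI impI)
      show "chi V E = k" by (rule chiG)
      fix V' E' assume a: "subgraph V' E' V E \<and> (V', E') \<noteq> (V, E)"
      then have VV: "V' \<subseteq> V" and EE: "E' \<subseteq> E" and inV: "\<forall>e\<in>E'. e \<subseteq> V'"
        unfolding subgraph_def by auto
      have "E' \<noteq> E"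
      proof
        assume EE': "E' = E"
        then have "V' \<noteq> V" using a by auto
        then obtain v where v: "v \<in> V" "v \<notin> V'" using VV by blast
        obtain e where e: "e \<in> E" "v \<in> e" using assms(4) v(1) unfolding no_isolated_def by blast
        then show False using inV EE' v(2) by blast
      qed
      then obtain e1 where e1: "e1 \<in> E" "e1 \<notin> E'" using EE by blast
      have "chi V' E' \<le> chi V (E - {e1})" by (rule chi_mono[OF critG[OF e1(1)]]) (use EE e1 VV in auto)
      also have "\<dots> \<le> k - 1" by (rule chi_le[OF critG[OF e1(1)]])
      finally show "chi V' E' < k" using k1 by linarith
    qed
  qed
  then show ?thesis unfolding W_def J_def .
qed

end
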